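(* Let $G$ be a finite group and $q$ a prime divisor of $|G|$. Let $Q\in{\rm Syl}_q(G)$ with $|Q|=q^m$, $m\geq 1$. If $Q$ is cyclic and $G$ has exactly $t$ Sylow $q$-subgroups, then $|F_{q^m}(G)|\geq q^m+(t-1)(q^m-q^{m-1})$.
   Context: For a finite group $G$ and a positive integer $n$, $F_n(G)=\{g\in G\mid g^n=1\}$. *)

theory Defs
  imports "HOL-Algebra.Algebra" "HOL-Computational_Algebra.Primes"
begin

definition Syl :: "('a, 'b) monoid_scheme \<Rightarrow> nat \<Rightarrow> 'a set set" where
  "Syl G q = {Q. subgroup Q G \<and> card Q = q ^ multiplicity q (order G)}"

definition Fn :: "('a, 'b) monoid_scheme \<Rightarrow> nat \<Rightarrow> 'a set" where
  "Fn G n = {g \<in> carrier G. g [^]\<^bsub>G\<^esub> n = \<one>\<^bsub>G\<^esub>}"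

end

theory Submission
  imports Defs
begin


lemma (in group) cyclic_bound:
  assumes sub: "subgroup Q G" and fin: "finite Q" and cyc: "cyclic_group (G\<lparr>carrier := Q\<rparr>)"
    and cardQ: "card Q = q ^ m" and m: "m \<ge> 1" and q: "Factorial_Ring.prime q"
  shows "card {y \<in> Q. y [^] (q ^ (m - 1)) = \<one>} \<le> q ^ (m - 1)"
proof -
  interpret H: group "G\<lparr>carrier := Q\<rparr>" by (rule subgroup.subgroup_is_group[OF sub]) (rule is_group)
  obtain x where xQ: "x \<in> Q" and sg: "subgroup_generated (G\<lparr>carrier := Q\<rparr>) {x} = G\<lparr>carrier := Q\<rparr>"
    using cyc unfolding cyclic_group_def by auto
  have gen: "generate (G\<lparr>carrier := Q\<rparr>) {x} = Q"
    using arg_cong[OF sg, of carrier] xQ by (simp add: carrier_subgroup_generated)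
  have xG: "x \<in> carrier G" using xQ sub subgroup.subset by blast
  have ordx: "H.ord x = q ^ m"
    using H.generate_pow_card[of x] xQ gen cardQ by simp
  have key: "x [^] k = \<one> \<longleftrightarrow> q ^ m dvd k" for k :: nat
    using H.pow_eq_id[of x k] xQ ordx by (simp add: nat_pow_consistent[symmetric])
  have Qeq: "Q = {x [^] k | k. k \<in> (UNIV :: nat set)}"
    using H.generate_pow_on_finite_carrier[of x] fin xQ gen by (simp add: nat_pow_consistent[symmetric])
  have "{y \<in> Q. y [^] (q ^ (m - 1)) = \<one>} \<subseteq> (\<lambda>j. x [^] (q * j)) ` {..<q ^ (m - 1)}"
  proof
    fix y assume y: "y \<in> {y \<in> Q. y [^] (q ^ (m - 1)) = \<one>}"
    then obtain k :: nat where yk: "y = x [^] k" using Qeq by auto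
    define r where "r = k mod q ^ m"
    have "x [^] k = x [^] (q ^ m * (k div q ^ m) + r)" unfolding r_def by simp
    also have "\<dots> = x [^] r"
      using key[of "q ^ m * (k div q ^ m)"] xG by (simp add: nat_pow_mult[symmetric] del: nat_pow_mult)
    finally have yr: "y = x [^] r" using yk by simp
    have "x [^] (r * q ^ (m - 1)) = \<one>" using y yr xG by (simp add: nat_pow_pow)
    hence "q ^ m dvd r * q ^ (m - 1)" using key by blast
    moreover have "q ^ m = q * q ^ (m - 1)" using m by (metis Suc_diff_1 less_le_trans power_Suc zero_less_one)
    ultimately have "q dvd r" using q by (simp add: prime_gt_0_nat)
    then obtain j where rj: "r = q * j" by blast
    have "r < q ^ m" unfolding r_def using q by (simp add: prime_gt_0_nat)
    hence "j < q ^ (m - 1)" using rj \<open>q ^ m = q * q ^ (m - 1)\<close> by simp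
    thus "y \<in> (\<lambda>j. x [^] (q * j)) ` {..<q ^ (m - 1)}" using yr rj by auto
  qed
  hence "card {y \<in> Q. y [^] (q ^ (m - 1)) = \<one>} \<le> card ((\<lambda>j. x [^] (q * j)) ` {..<q ^ (m - 1)})"
    by (intro card_mono) auto
  also have "\<dots> \<le> q ^ (m - 1)" using card_image_le[of "{..<q ^ (m - 1)}"] by simp
  finally show ?thesis .
qed



lemma (in group_action) pgroup_fixed:
  assumes finE: "finite E" and q: "Factorial_Ring.prime q" and ordG: "order G = q ^ k"
    and nd: "\<not> q dvd card E"
  shows "\<exists>x\<in>E. \<forall>g\<in>carrier G. \<phi> g x = x"
proof (rule ccontr)
  assume nf: "\<not> ?thesis"
  have orbdvd: "q dvd card orb" if orb: "orb \<in> orbits G E \<phi>" for orb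
  proof -
    obtain x where x: "x \<in> E" and ox: "orb = orbit G \<phi> x" using orb unfolding orbits_def by auto
    have "card orb dvd q ^ k"
      using orbit_stabilizer_theorem[OF x] ox ordG by (metis dvd_triv_left)
    then obtain i where i: "card orb = q ^ i" using divides_primepow_nat[OF q] by auto
    show ?thesis
    proof (cases i)
      case 0
      hence c1: "card orb = 1" using i by simp
      have "x \<in> orb" using ox orbit_refl[OF x] by simp
      hence "orb = {x}" using c1 by (metis card_1_singletonE singletonD)
      moreover obtain g where "g \<in> carrier G" "\<phi> g x \<noteq> x" using nf x by auto
      moreover have "\<phi> g x \<in> orb" if "g \<in> carrier G" for g
        using ox that unfolding orbit_def by auto
      ultimately show ?thesis by blast
    next
      case (Suc j)
      then show ?thesis using i by simp
    qed
  qed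
  have "(\<Sum>orb\<in>orbits G E \<phi>. \<Sum>x\<in>orb. (1::nat)) = (\<Sum>x\<in>E. 1)"
    using disjoint_sum[OF finE] .
  hence "card E = (\<Sum>orb\<in>orbits G E \<phi>. card orb)" by simp
  moreover have "q dvd (\<Sum>orb\<in>orbits G E \<phi>. card orb)"
    by (rule dvd_sum) (rule orbdvd)
  ultimately show False using nd by simp
qed

lemma (in group) coset_action:
  assumes subP: "subgroup P G" and subQ: "subgroup Q G"
  shows "group_action (G\<lparr>carrier := P\<rparr>) (rcosets Q) (\<lambda>p. \<lambda>Y\<in>rcosets Q. Y #> inv p)"
proof -
  let ?E = "rcosets Q"
  let ?f = "\<lambda>p. \<lambda>Y\<in>rcosets Q. Y #> inv p"
  have QG: "Q \<subseteq> carrier G" using subQ subgroup.subset by blast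
  have PG: "P \<subseteq> carrier G" using subP subgroup.subset by blast
  have cl: "Y #> a \<in> ?E" if Y: "Y \<in> ?E" and a: "a \<in> carrier G" for Y a
  proof -
    obtain b where b: "b \<in> carrier G" "Y = Q #> b" using Y by (auto simp: RCOSETS_def)
    show ?thesis using b a coset_mult_assoc[OF QG] rcosetsI[OF QG] by simp
  qed
  have XG: "Y \<subseteq> carrier G" if "Y \<in> ?E" for Y
    using subgroup.rcosets_carrier[OF subQ is_group that] .
  have bij: "?f p \<in> Bij ?E" if p: "p \<in> carrier G" for p
  proof -
    have "bij_betw (?f p) ?E ?E"
    proof (rule bij_betwI[where g = "\<lambda>Y. Y #> p"])
      show "?f p \<in> ?E \<rightarrow> ?E" using cl p by auto
      show "(\<lambda>Y. Y #> p) \<in> ?E \<rightarrow> ?E" using cl p by auto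
      show "(?f p Y) #> p = Y" if "Y \<in> ?E" for Y
        using that p XG[OF that] by (simp add: coset_mult_assoc coset_mult_one)
      show "?f p (Y #> p) = Y" if "Y \<in> ?E" for Y
        using that p XG[OF that] cl by (simp add: coset_mult_assoc coset_mult_one)
    qed
    thus ?thesis unfolding Bij_def by auto
  qed
  have hom: "?f \<in> hom (G\<lparr>carrier := P\<rparr>) (BijGroup ?E)"
  proof (rule homI)
    fix x assume "x \<in> carrier (G\<lparr>carrier := P\<rparr>)"
    thus "?f x \<in> carrier (BijGroup ?E)" using bij PG unfolding BijGroup_def by auto
  next
    fix x y assume xy: "x \<in> carrier (G\<lparr>carrier := P\<rparr>)" "y \<in> carrier (G\<lparr>carrier := P\<rparr>)"
    hence x: "x \<in> carrier G" and y: "y \<in> carrier G" using PG by auto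
    show "?f (x \<otimes>\<^bsub>G\<lparr>carrier := P\<rparr>\<^esub> y) = ?f x \<otimes>\<^bsub>BijGroup ?E\<^esub> ?f y"
      using bij[OF x] bij[OF y]
      by (auto simp: BijGroup_def compose_def fun_eq_iff x y inv_mult_group cl coset_mult_assoc XG)
  qed
  show ?thesis
    unfolding group_action_def group_hom_def group_hom_axioms_def
    using hom subgroup.subgroup_is_group[OF subP is_group] group_BijGroup by auto
qed



lemma (in group) sylow_conj:
  assumes fin: "finite (carrier G)" and q: "Factorial_Ring.prime q"
    and subP: "subgroup P G" and cardP: "card P = q ^ k" and subQ: "subgroup Q G"
    and nd: "\<not> q dvd card (rcosets Q)"
  shows "\<exists>g\<in>carrier G. \<forall>p\<in>P. g \<otimes> p \<otimes> inv g \<in> Q"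
proof -
  interpret A: group_action "G\<lparr>carrier := P\<rparr>" "rcosets Q" "\<lambda>p. \<lambda>Y\<in>rcosets Q. Y #> inv p"
    by (rule coset_action[OF subP subQ])
  have "rcosets Q \<subseteq> Pow (carrier G)"
    using subgroup.rcosets_carrier[OF subQ is_group] by blast
  hence finE: "finite (rcosets Q)" using fin by (meson finite_Pow_iff finite_subset)
  have ordP: "order (G\<lparr>carrier := P\<rparr>) = q ^ k" by (simp add: order_def cardP)
  obtain Y where Y: "Y \<in> rcosets Q" and fx: "\<forall>p\<in>P. (\<lambda>p. \<lambda>Y\<in>rcosets Q. Y #> inv p) p Y = Y"
    using A.pgroup_fixed[OF finE q ordP nd] by auto
  obtain g where g: "g \<in> carrier G" and Yg: "Y = Q #> g" using Y by (auto simp: RCOSETS_def)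
  have QG: "Q \<subseteq> carrier G" using subQ subgroup.subset by blast
  have PG: "P \<subseteq> carrier G" using subP subgroup.subset by blast
  have "g \<otimes> p \<otimes> inv g \<in> Q" if p: "p \<in> P" for p
  proof -
    have ip: "inv p \<in> P" using subgroup.m_inv_closed[OF subP p] .
    have pG: "p \<in> carrier G" using p PG by auto
    have "Y #> inv (inv p) = Y" using fx ip Y by auto
    hence YP: "Y #> p = Y" using pG by simp
    have "g \<in> Y" using Yg rcos_self[OF g subQ] by simp
    hence "g \<otimes> p \<in> Y #> p" using rcosI[of g Y p] pG Yg QG g
      by (metis Y subQ subgroup.rcosets_carrier is_group)
    hence "g \<otimes> p \<in> Q #> g" using YP Yg by simp
    then obtain h where h: "h \<in> Q" "g \<otimes> p = h \<otimes> g" by (auto simp: r_coset_def)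
    have hG: "h \<in> carrier G" using h QG by auto
    have "g \<otimes> p \<otimes> inv g = h \<otimes> g \<otimes> inv g" using h by simp
    also have "\<dots> = h" using hG g by (simp add: m_assoc)
    finally show ?thesis using h by simp
  qed
  thus ?thesis using g by blast
qed

lemma (in group) pow_conj:
  assumes g: "g \<in> carrier G" and x: "x \<in> carrier G"
  shows "(g \<otimes> x \<otimes> inv g) [^] (j::nat) = g \<otimes> x [^] j \<otimes> inv g"
proof (induction j)
  case 0
  then show ?case using g by simp
next
  case (Suc j)
  have c: "inv g \<otimes> (g \<otimes> z) = z" if "z \<in> carrier G" for z
    using g that by (simp add: m_assoc[symmetric])
  have "(g \<otimes> x \<otimes> inv g) [^] Suc j = (g \<otimes> x [^] j \<otimes> inv g) \<otimes> (g \<otimes> x \<otimes> inv g)"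
    using Suc by simp
  also have "\<dots> = g \<otimes> x [^] j \<otimes> x \<otimes> inv g"
    using g x by (simp add: m_assoc c)
  also have "\<dots> = g \<otimes> x [^] Suc j \<otimes> inv g"
    using g x by (simp add: nat_pow_Suc m_assoc)
  finally show ?case .
qed



lemma (in group) main_count:
  assumes fin: "finite (carrier G)" and q: "Factorial_Ring.prime q"
    and QS: "Q \<in> Syl G q" and cQ: "card Q = q ^ m" and m: "m \<ge> 1"
    and cyc: "cyclic_group (G\<lparr>carrier := Q\<rparr>)"
  shows "card (Fn G (q ^ m)) \<ge> q ^ m + (card (Syl G q) - 1) * (q ^ m - q ^ (m - 1))"
proof -
  define n where "n = q ^ m"
  define k where "k = q ^ (m - 1)"
  have nk: "n = q * k" unfolding n_def k_def using m
    by (metis Suc_diff_1 less_le_trans power_Suc zero_less_one)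
  have q0: "q > 1" using q prime_gt_1_nat by blast
  have subQ: "subgroup Q G" and cQm: "card Q = q ^ multiplicity q (order G)"
    using QS unfolding Syl_def by auto
  have sylP: "subgroup P G \<and> card P = n" if "P \<in> Syl G q" for P
    using that cQ cQm unfolding Syl_def n_def by auto
  have finP: "finite P" if "P \<in> Syl G q" for P
    using sylP[OF that] subgroup.subset fin finite_subset by blast
  have PG: "P \<subseteq> carrier G" if "P \<in> Syl G q" for P
    using sylP[OF that] subgroup.subset by metis
  have finQ: "finite Q" using finP QS by blast
  have index: "\<not> q dvd card (rcosets Q)"
  proof
    assume "q dvd card (rcosets Q)"
    then obtain c where c: "card (rcosets Q) = q * c" by blast
    have "order G = q * c * q ^ multiplicity q (order G)"
      using lagrange[OF subQ] c cQm by simp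
    hence "order G = (q * q ^ multiplicity q (order G)) * c" by (simp add: ac_simps)
    hence "q ^ Suc (multiplicity q (order G)) dvd order G" by (metis dvd_triv_left power_Suc)
    moreover have "order G \<noteq> 0" using fin order_gt_0_iff_finite by auto
    ultimately show False using power_dvd_iff_le_multiplicity q
      by (metis Suc_n_not_le_n not_prime_unit)
  qed
  have small: "card {x \<in> P. x [^] k = \<one>} \<le> k" if P: "P \<in> Syl G q" for P
  proof -
    obtain g where g: "g \<in> carrier G" and gc: "\<forall>p\<in>P. g \<otimes> p \<otimes> inv g \<in> Q"
    proof -
      have "subgroup P G" "card P = q ^ m" using sylP[OF P] n_def by auto
      from sylow_conj[OF fin q this subQ index] show ?thesis using that by blast
    qed
    have "card {x \<in> P. x [^] k = \<one>} \<le> card {y \<in> Q. y [^] k = \<one>}"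
    proof (rule card_inj_on_le[where f = "\<lambda>x. g \<otimes> x \<otimes> inv g"])
      show "inj_on (\<lambda>x. g \<otimes> x \<otimes> inv g) {x \<in> P. x [^] k = \<one>}"
      proof (rule inj_onI)
        fix x y assume x: "x \<in> {x \<in> P. x [^] k = \<one>}" and y: "y \<in> {x \<in> P. x [^] k = \<one>}"
          and e: "g \<otimes> x \<otimes> inv g = g \<otimes> y \<otimes> inv g"
        have xG: "x \<in> carrier G" and yG: "y \<in> carrier G" using x y PG[OF P] by auto
        have "g \<otimes> x = g \<otimes> y" using e xG yG g r_cancel[of "inv g" "g \<otimes> x" "g \<otimes> y"] by simp
        thus "x = y" using xG yG g l_cancel[of g x y] by simp
      qed
      show "(\<lambda>x. g \<otimes> x \<otimes> inv g) ` {x \<in> P. x [^] k = \<one>} \<subseteq> {y \<in> Q. y [^] k = \<one>}"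
      proof
        fix y assume "y \<in> (\<lambda>x. g \<otimes> x \<otimes> inv g) ` {x \<in> P. x [^] k = \<one>}"
        then obtain x where x: "x \<in> P" "x [^] k = \<one>" and y: "y = g \<otimes> x \<otimes> inv g" by blast
        have xG: "x \<in> carrier G" using x PG[OF P] by auto
        have "y [^] k = g \<otimes> x [^] k \<otimes> inv g" using pow_conj[OF g xG] y by simp
        also have "\<dots> = \<one>" using x g by simp
        finally show "y \<in> {y \<in> Q. y [^] k = \<one>}" using gc x y by blast
      qed
      show "finite {y \<in> Q. y [^] k = \<one>}" using finQ by simp
    qed
    also have "\<dots> \<le> k" unfolding k_def using cyclic_bound[OF subQ finQ cyc cQ m q] .
    finally show ?thesis .
  qed
  define S where "S P = {x \<in> P. x [^] k \<noteq> \<one>}" for P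
  have cardS: "card (S P) \<ge> n - k" if P: "P \<in> Syl G q" for P
  proof -
    have "P = S P \<union> {x \<in> P. x [^] k = \<one>}" unfolding S_def by auto
    hence "card P = card (S P) + card {x \<in> P. x [^] k = \<one>}"
    proof -
      have "S P \<inter> {x \<in> P. x [^] k = \<one>} = {}" unfolding S_def by auto
      moreover have "finite (S P)" "finite {x \<in> P. x [^] k = \<one>}" using finP[OF P] unfolding S_def by auto
      ultimately show ?thesis using \<open>P = S P \<union> {x \<in> P. x [^] k = \<one>}\<close> card_Un_disjoint by metis
    qed
    thus ?thesis using small[OF P] sylP[OF P] by linarith
  qed
  have powone: "x [^] n = \<one>" if P: "P \<in> Syl G q" and x: "x \<in> P" for P x
  proof -
    interpret H: group "G\<lparr>carrier := P\<rparr>" using sylP[OF P] subgroup.subgroup_is_group is_group by blast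
    have "x [^]\<^bsub>G\<lparr>carrier := P\<rparr>\<^esub> order (G\<lparr>carrier := P\<rparr>) = \<one>"
      using H.pow_order_eq_1[of x] x by simp
    thus ?thesis using sylP[OF P] by (simp add: order_def nat_pow_consistent[symmetric])
  qed
  have genS: "generate G {x} = P" if P: "P \<in> Syl G q" and x: "x \<in> S P" for P x
  proof -
    have xP: "x \<in> P" and xk: "x [^] k \<noteq> \<one>" using x unfolding S_def by auto
    have xG: "x \<in> carrier G" using xP PG[OF P] by auto
    have "ord x dvd q ^ m" using pow_eq_id[OF xG] powone[OF P xP] n_def by simp
    then obtain i where i: "i \<le> m" "ord x = q ^ i" using divides_primepow_nat[OF q] by auto
    have "i = m"
    proof (rule ccontr)
      assume "i \<noteq> m"
      hence "i \<le> m - 1" using i by simp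
      hence "ord x dvd k" unfolding k_def using i by (simp add: le_imp_power_dvd)
      thus False using pow_eq_id[OF xG] xk by simp
    qed
    hence co: "card (generate G {x}) = n" using generate_pow_card[OF xG] i n_def by simp
    have sub: "generate G {x} \<subseteq> P"
      using generate_subgroup_incl[of "{x}" P] xP sylP[OF P] by auto
    show ?thesis using card_subset_eq[OF finP[OF P] sub] co sylP[OF P] by simp
  qed
  have same: "P = P'" if "P \<in> Syl G q" "P' \<in> Syl G q" "x \<in> S P" "x \<in> P'" for P P' x
  proof -
    have "P \<subseteq> P'" using genS[OF that(1,3)] generate_subgroup_incl[of "{x}" P'] that(4) sylP[OF that(2)]
      by auto
    thus ?thesis using card_subset_eq[OF finP[OF that(2)]] sylP[OF that(1)] sylP[OF that(2)] by simp
  qed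
  have finSyl: "finite (Syl G q)"
  proof -
    have "Syl G q \<subseteq> Pow (carrier G)" using PG by blast
    thus ?thesis using fin by (meson finite_Pow_iff finite_subset)
  qed
  define U where "U = Q \<union> \<Union> (S ` (Syl G q - {Q}))"
  have finS: "finite (S P)" if "P \<in> Syl G q" for P using finP[OF that] unfolding S_def by simp
  have UF: "U \<subseteq> Fn G n"
  proof
    fix x assume "x \<in> U"
    then obtain P where P: "P \<in> Syl G q" and xP: "x \<in> P"
      unfolding U_def S_def using QS by blast
    show "x \<in> Fn G n" unfolding Fn_def using powone[OF P xP] PG[OF P] xP by blast
  qed
  have finF: "finite (Fn G n)" using fin unfolding Fn_def by simp
  have disj1: "Q \<inter> \<Union> (S ` (Syl G q - {Q})) = {}"
  proof (rule ccontr)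
    assume "Q \<inter> \<Union> (S ` (Syl G q - {Q})) \<noteq> {}"
    then obtain x P where "x \<in> Q" "P \<in> Syl G q" "P \<noteq> Q" "x \<in> S P" by blast
    thus False using same[of P Q x] QS by simp
  qed
  have cardUn: "card (\<Union> (S ` (Syl G q - {Q}))) = (\<Sum>P\<in>Syl G q - {Q}. card (S P))"
  proof (rule card_UN_disjoint)
    show "finite (Syl G q - {Q})" using finSyl by simp
    show "\<forall>i\<in>Syl G q - {Q}. finite (S i)" using finS by blast
    show "\<forall>i\<in>Syl G q - {Q}. \<forall>j\<in>Syl G q - {Q}. i \<noteq> j \<longrightarrow> S i \<inter> S j = {}"
    proof (intro ballI impI)
      fix P P' assume P: "P \<in> Syl G q - {Q}" and P': "P' \<in> Syl G q - {Q}" and ne: "P \<noteq> P'"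
      show "S P \<inter> S P' = {}"
      proof (rule ccontr)
        assume "S P \<inter> S P' \<noteq> {}"
        then obtain x where "x \<in> S P" "x \<in> S P'" by blast
        hence "x \<in> S P" "x \<in> P'" unfolding S_def by auto
        thus False using same[of P P' x] P P' ne by simp
      qed
    qed
  qed
  have "(\<Sum>P\<in>Syl G q - {Q}. n - k) \<le> (\<Sum>P\<in>Syl G q - {Q}. card (S P))"
    by (rule sum_mono) (use cardS in auto)
  hence "card (Syl G q - {Q}) * (n - k) \<le> card (\<Union> (S ` (Syl G q - {Q})))"
    using cardUn by simp
  hence "(card (Syl G q) - 1) * (n - k) \<le> card (\<Union> (S ` (Syl G q - {Q})))"
    using card_Diff_singleton[OF QS] by simp
  moreover have "card U = card Q + card (\<Union> (S ` (Syl G q - {Q})))"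
    unfolding U_def
    by (rule card_Un_disjoint) (use finQ finSyl finS disj1 in auto)
  moreover have "card U \<le> card (Fn G n)" using card_mono[OF finF UF] .
  ultimately show ?thesis using cQ unfolding n_def k_def by linarith
qed


theorem lemma2p1:
  fixes G (structure) and q m t :: nat and Q :: "'a set"
  assumes "group G" and "finite (carrier G)"
    and "Factorial_Ring.prime q" and "q dvd order G"
    and "Q \<in> Syl G q" and "card Q = q ^ m" and "m \<ge> 1"
    and "cyclic_group (G\<lparr>carrier := Q\<rparr>)"
    and "card (Syl G q) = t"
  shows "card (Fn G (q ^ m)) \<ge> q ^ m + (t - 1) * (q ^ m - q ^ (m - 1))"
  using group.main_count[OF assms(1,2,3,5,6,7,8)] assms(9) by simp

end
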